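(* Let $M$ be a smooth manifold of dimension $4$, let $O_M\subset\wedge^2T^\ast M$ be the open subbundle of $2$-covectors of rank $4$, and let $I\colon J^2O_M\to\mathbb{R}$ be the function defined by $$I(j^2_x\Omega)\,\Omega_x\wedge\Omega_x=(d\omega_\Omega)_x\wedge(d\omega_\Omega)_x .$$ Let $\Omega$ be a $2$-form on $M$ with values in $O_M$ and let $x\in M$ be a point at which $\omega_\Omega$ is of class $4$. Let $A_\Omega\colon TM\to TM$ be the endomorphism determined by $d\omega_\Omega(X,Y)=\Omega(A_\Omega X,Y)=\Omega(X,A_\Omega Y)$ for all $X,Y\in T_xM$. Then $$\det\bigl(\lambda\,\mathrm{id}-(A_\Omega)_x\bigr)=\bigl(\lambda^2+I(j^2_x\Omega)\bigr)^2 .$$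
   Context: For a $2$-form $\Omega$ of rank $4$ on a $4$-manifold, $\omega_\Omega$ denotes the unique $1$-form with $\omega_\Omega\wedge\Omega=d\Omega$. The class of a differential form $\omega$ at a point $x$ is the codimension in $T_xM$ of the subspace of vectors $X\in T_xM$ with $i_X\omega=0$ and $i_X(d\omega)=0$. $J^2O_M$ denotes the bundle of $2$-jets of sections of $O_M$. *)

theory Defs
  imports "HOL-Analysis.Analysis" "HOL-Library.Numeral_Type"
begin

text \<open>Local coordinate model: the 4-manifold is an open set U of real^4 (a chart);
  a k-form is given by its (antisymmetric) coefficient array in the coordinate coframe.\<close>

definition partial :: "4 \<Rightarrow> (real^4 \<Rightarrow> real) \<Rightarrow> real^4 \<Rightarrow> real" where
  "partial i f y = frechet_derivative f (at y) (axis i 1)"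

fun Ck_on :: "nat \<Rightarrow> (real^4) set \<Rightarrow> (real^4 \<Rightarrow> real) \<Rightarrow> bool" where
  "Ck_on 0 U f = continuous_on U f"
| "Ck_on (Suc k) U f = (continuous_on U f \<and> (\<forall>y\<in>U. f differentiable (at y))
      \<and> (\<forall>i. Ck_on k U (partial i f)))"

definition smooth_on :: "(real^4) set \<Rightarrow> (real^4 \<Rightarrow> real) \<Rightarrow> bool" where
  "smooth_on U f = (\<forall>k. Ck_on k U f)"

definition d2 :: "(real^4 \<Rightarrow> real^4^4) \<Rightarrow> real^4 \<Rightarrow> 4 \<Rightarrow> 4 \<Rightarrow> 4 \<Rightarrow> real" where
  "d2 \<Omega> y i j k = partial i (\<lambda>z. \<Omega> z $ j $ k) y + partial j (\<lambda>z. \<Omega> z $ k $ i) y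
                  + partial k (\<lambda>z. \<Omega> z $ i $ j) y"

definition d1 :: "(real^4 \<Rightarrow> real^4) \<Rightarrow> real^4 \<Rightarrow> real^4^4" where
  "d1 w y = (\<chi> i j. partial i (\<lambda>z. w z $ j) y - partial j (\<lambda>z. w z $ i) y)"

definition wedge12 :: "real^4 \<Rightarrow> real^4^4 \<Rightarrow> 4 \<Rightarrow> 4 \<Rightarrow> 4 \<Rightarrow> real" where
  "wedge12 w W i j k = w$i * W$j$k + w$j * W$k$i + w$k * W$i$j"

text \<open>Coefficient of e^0 \<and> e^1 \<and> e^2 \<and> e^3 in the wedge of two 2-forms.\<close>
definition wedge22 :: "real^4^4 \<Rightarrow> real^4^4 \<Rightarrow> real" where
  "wedge22 a b =
     a$0$1 * b$2$3 - a$0$2 * b$1$3 + a$0$3 * b$1$2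
   + a$1$2 * b$0$3 - a$1$3 * b$0$2 + a$2$3 * b$0$1"

definition omegaO :: "(real^4 \<Rightarrow> real^4^4) \<Rightarrow> real^4 \<Rightarrow> real^4" where
  "omegaO \<Omega> y = (THE w. \<forall>i j k. wedge12 w (\<Omega> y) i j k = d2 \<Omega> y i j k)"

definition Iinv :: "(real^4 \<Rightarrow> real^4^4) \<Rightarrow> real^4 \<Rightarrow> real" where
  "Iinv \<Omega> x = (THE c. c * wedge22 (\<Omega> x) (\<Omega> x)
                     = wedge22 (d1 (omegaO \<Omega>) x) (d1 (omegaO \<Omega>) x))"

definition bil :: "real^4^4 \<Rightarrow> real^4 \<Rightarrow> real^4 \<Rightarrow> real" where
  "bil M X Y = (\<Sum>i\<in>UNIV. \<Sum>j\<in>UNIV. X$i * M$i$j * Y$j)"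

definition form_class :: "real^4 \<Rightarrow> real^4^4 \<Rightarrow> nat" where
  "form_class w F = CARD(4) - dim {X::real^4. (\<Sum>i\<in>UNIV. X$i * w$i) = 0
                                      \<and> (\<forall>Y. bil F X Y = 0)}"

definition A_Omega :: "(real^4 \<Rightarrow> real^4^4) \<Rightarrow> real^4 \<Rightarrow> real^4^4" where
  "A_Omega \<Omega> x = (THE A. \<forall>X Y. bil (d1 (omegaO \<Omega>) x) X Y = bil (\<Omega> x) (A *v X) Y
                           \<and> bil (d1 (omegaO \<Omega>) x) X Y = bil (\<Omega> x) X (A *v Y))"

end

theory Submission
  imports Defs
begin

lemma partial_at:
  assumes "(f has_derivative D) (at y)"
  shows "partial i f y = D (axis i 1)"
  using frechet_derivative_at[OF assms] unfolding partial_def by simp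

lemma partial_cong:
  assumes "open U" "x \<in> U" "\<And>y. y \<in> U \<Longrightarrow> f y = g y"
  shows "partial i f x = partial i g x"
proof -
  have "\<And>D. (f has_derivative D) (at x) \<longleftrightarrow> (g has_derivative D) (at x)"
    using has_derivative_transform_within_open[OF _ assms(1,2), of f _ UNIV g]
      has_derivative_transform_within_open[OF _ assms(1,2), of g _ UNIV f] assms(3)
    by auto
  then show ?thesis unfolding partial_def frechet_derivative_def by simp
qed

lemma line_deriv:
  fixes g :: "real^4 \<Rightarrow> real"
  assumes "g differentiable (at (p + s *\<^sub>R w))"
  shows "((\<lambda>s. g (p + s *\<^sub>R w)) has_real_derivative
           (frechet_derivative g (at (p + s *\<^sub>R w)) w)) (at s)"
proof -
  let ?D = "frechet_derivative g (at (p + s *\<^sub>R w))"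
  have g: "(g has_derivative ?D) (at (p + s *\<^sub>R w))"
    using assms frechet_derivative_works by blast
  have l: "((\<lambda>s. p + s *\<^sub>R w) has_derivative (\<lambda>h. h *\<^sub>R w)) (at s)"
    by (auto intro!: derivative_eq_intros)
  have c: "((\<lambda>s. g (p + s *\<^sub>R w)) has_derivative (\<lambda>h. ?D (h *\<^sub>R w))) (at s)"
    using has_derivative_compose[OF l g] by (simp add: o_def)
  have lin: "linear ?D" using g has_derivative_linear by blast
  have "(\<lambda>h. ?D (h *\<^sub>R w)) = (*) (?D w)"
    using linear_scale[OF lin] by (auto simp: fun_eq_iff mult.commute)
  then show ?thesis using c by (simp add: has_field_derivative_def)
qed

lemma ball_pt:
  fixes x :: "real^4"
  assumes "ball x r \<subseteq> U" "\<bar>s\<bar> + \<bar>t\<bar> < r"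
  shows "x + s *\<^sub>R axis i 1 + t *\<^sub>R axis j 1 \<in> U"
proof -
  have n: "norm (s *\<^sub>R axis i (1::real) + t *\<^sub>R axis j 1) \<le> \<bar>s\<bar> + \<bar>t\<bar>"
    using norm_triangle_ineq[of "s *\<^sub>R axis i (1::real)" "t *\<^sub>R axis j 1"] by simp
  have "dist x (x + s *\<^sub>R axis i 1 + t *\<^sub>R axis j 1) = norm (s *\<^sub>R axis i (1::real) + t *\<^sub>R axis j 1)"
      using norm_minus_cancel[of "s *\<^sub>R axis i (1::real) + t *\<^sub>R axis j 1"]
      by (simp add: dist_norm)
  then have "dist x (x + s *\<^sub>R axis i 1 + t *\<^sub>R axis j 1) < r" using n assms(2) by linarith
  then show ?thesis using assms(1) by auto
qed

lemma mixed_diff: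
  fixes f :: "real^4 \<Rightarrow> real"
  assumes U: "ball x r \<subseteq> U"
    and d1: "\<forall>y\<in>U. f differentiable (at y)"
    and d2: "\<forall>y\<in>U. partial i f differentiable (at y)"
    and h: "0 < h" "2 * h < r"
  shows "\<exists>s t. 0 < s \<and> s < h \<and> 0 < t \<and> t < h \<and>
     f (x + h *\<^sub>R axis i 1 + h *\<^sub>R axis j 1) - f (x + h *\<^sub>R axis i 1)
       - f (x + h *\<^sub>R axis j 1) + f x
     = h * h * partial j (partial i f) (x + s *\<^sub>R axis i 1 + t *\<^sub>R axis j 1)"
proof -
  define u where "u = (axis i 1 :: real^4)"
  define v where "v = (axis j 1 :: real^4)"
  have inU: "x + s *\<^sub>R u + t *\<^sub>R v \<in> U" if "0 \<le> s" "s \<le> h" "0 \<le> t" "t \<le> h" for s t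
    using ball_pt[OF U, of s t i j] that h unfolding u_def v_def by auto
  define \<phi> where "\<phi> s = f ((x + h *\<^sub>R v) + s *\<^sub>R u) - f (x + s *\<^sub>R u)" for s
  have "\<exists>z. 0 < z \<and> z < h \<and> \<phi> h - \<phi> 0 = (h - 0) *
      (partial i f ((x + h *\<^sub>R v) + z *\<^sub>R u) - partial i f (x + z *\<^sub>R u))"
  proof (rule MVT2[OF h(1)])
    fix s assume s: "0 \<le> s" "s \<le> h"
    have p1: "(x + h *\<^sub>R v) + s *\<^sub>R u \<in> U" using inU[OF s, of h] h by (simp add: algebra_simps)
    have p2: "x + s *\<^sub>R u \<in> U" using inU[OF s, of 0] h by simp
    show "(\<phi> has_real_derivative
        (partial i f ((x + h *\<^sub>R v) + s *\<^sub>R u) - partial i f (x + s *\<^sub>R u))) (at s)"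
      unfolding \<phi>_def partial_def u_def
      by (intro DERIV_diff line_deriv) (use d1 p1 p2 u_def in auto)
  qed
  then obtain z where z: "0 < z" "z < h" and
    ez: "\<phi> h - \<phi> 0 = h * (partial i f ((x + z *\<^sub>R u) + h *\<^sub>R v) - partial i f ((x + z *\<^sub>R u) + 0 *\<^sub>R v))"
    by (auto simp: algebra_simps)
  define \<psi> where "\<psi> t = partial i f ((x + z *\<^sub>R u) + t *\<^sub>R v)" for t
  have "\<exists>w. 0 < w \<and> w < h \<and> \<psi> h - \<psi> 0 = (h - 0) *
      partial j (partial i f) ((x + z *\<^sub>R u) + w *\<^sub>R v)"
  proof (rule MVT2[OF h(1)])
    fix t assume t: "0 \<le> t" "t \<le> h"
    have p: "(x + z *\<^sub>R u) + t *\<^sub>R v \<in> U" using inU[of z t] z t by simp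
    show "(\<psi> has_real_derivative partial j (partial i f) ((x + z *\<^sub>R u) + t *\<^sub>R v)) (at t)"
      unfolding \<psi>_def partial_def[of j] v_def
      by (rule line_deriv) (use d2 p v_def in auto)
  qed
  then obtain w where w: "0 < w" "w < h" and
    ew: "\<psi> h - \<psi> 0 = h * partial j (partial i f) ((x + z *\<^sub>R u) + w *\<^sub>R v)" by auto
  have "f (x + h *\<^sub>R u + h *\<^sub>R v) - f (x + h *\<^sub>R u) - f (x + h *\<^sub>R v) + f x = \<phi> h - \<phi> 0"
    unfolding \<phi>_def by (simp add: algebra_simps)
  also have "\<dots> = h * (\<psi> h - \<psi> 0)" using ez unfolding \<psi>_def by simp
  also have "\<dots> = h * h * partial j (partial i f) (x + z *\<^sub>R u + w *\<^sub>R v)" using ew by simp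
  finally show ?thesis using z w unfolding u_def v_def by blast
qed

lemma abs_contra: "\<bar>A - a\<bar> < \<bar>a - b\<bar> / 2 \<Longrightarrow> \<bar>(A::real) - b\<bar> < \<bar>a - b\<bar> / 2 \<Longrightarrow> False"
  by (simp add: abs_if split: if_split_asm)

lemma schwarz:
  fixes f :: "real^4 \<Rightarrow> real"
  assumes "open U" "x \<in> U" "Ck_on 2 U f"
  shows "partial i (partial j f) x = partial j (partial i f) x"
proof (rule ccontr)
  have C0: "(\<forall>y\<in>U. f differentiable (at y)) \<and> (\<forall>k. Ck_on (Suc 0) U (partial k f))"
    using assms(3) by (simp add: numeral_2_eq_2)
  have C: "\<forall>y\<in>U. f differentiable (at y)" "\<And>k. \<forall>y\<in>U. partial k f differentiable (at y)"
     "\<And>k l. continuous_on U (partial l (partial k f))"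
    using C0 by simp_all
  obtain r where r: "r > 0" "ball x r \<subseteq> U" using assms(1,2) open_contains_ball by blast
  define a where "a = partial j (partial i f) x"
  define b where "b = partial i (partial j f) x"
  assume "b \<noteq> a"
  define e where "e = \<bar>a - b\<bar> / 2"
  have e: "e > 0" using \<open>b \<noteq> a\<close> unfolding e_def by simp
  have "\<forall>e>0. \<exists>d>0. \<forall>y\<in>U. dist y x < d \<longrightarrow> dist (partial j (partial i f) y) a < e"
    using C(3)[of j i] assms(2) unfolding continuous_on_iff a_def by simp
  then obtain d1 where d1: "d1 > 0" "\<forall>y\<in>U. dist y x < d1 \<longrightarrow> dist (partial j (partial i f) y) a < e"
    using e by blast
  have "\<forall>e>0. \<exists>d>0. \<forall>y\<in>U. dist y x < d \<longrightarrow> dist (partial i (partial j f) y) b < e"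
    using C(3)[of i j] assms(2) unfolding continuous_on_iff b_def by simp
  then obtain d2 where d2: "d2 > 0" "\<forall>y\<in>U. dist y x < d2 \<longrightarrow> dist (partial i (partial j f) y) b < e"
    using e by blast
  define h where "h = min r (min d1 d2) / 4"
  have h: "0 < h" "2 * h < r" "2 * h < d1" "2 * h < d2" using r d1 d2 unfolding h_def by auto
  obtain s t where st: "0 < s" "s < h" "0 < t" "t < h" and
    e1: "f (x + h *\<^sub>R axis i 1 + h *\<^sub>R axis j 1) - f (x + h *\<^sub>R axis i 1)
       - f (x + h *\<^sub>R axis j 1) + f x
     = h * h * partial j (partial i f) (x + s *\<^sub>R axis i 1 + t *\<^sub>R axis j 1)"
    using mixed_diff[OF r(2) C(1) C(2) h(1,2)] by blast
  obtain s' t' where st': "0 < s'" "s' < h" "0 < t'" "t' < h" and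
    e2: "f (x + h *\<^sub>R axis j 1 + h *\<^sub>R axis i 1) - f (x + h *\<^sub>R axis j 1)
       - f (x + h *\<^sub>R axis i 1) + f x
     = h * h * partial i (partial j f) (x + s' *\<^sub>R axis j 1 + t' *\<^sub>R axis i 1)"
    using mixed_diff[OF r(2) C(1) C(2) h(1,2)] by blast
  have xe: "x + h *\<^sub>R axis j 1 + h *\<^sub>R axis i 1 = x + h *\<^sub>R axis i 1 + h *\<^sub>R axis j (1::real)"
    by (simp add: algebra_simps)
  have "h * h * partial j (partial i f) (x + s *\<^sub>R axis i 1 + t *\<^sub>R axis j 1)
      = h * h * partial i (partial j f) (x + s' *\<^sub>R axis j 1 + t' *\<^sub>R axis i 1)"
    using e1 e2 unfolding xe by linarith
  then have eq: "partial j (partial i f) (x + s *\<^sub>R axis i 1 + t *\<^sub>R axis j 1)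
      = partial i (partial j f) (x + s' *\<^sub>R axis j 1 + t' *\<^sub>R axis i 1)"
    using h(1) by simp
  have p1: "x + s *\<^sub>R axis i 1 + t *\<^sub>R axis j 1 \<in> U" using ball_pt[OF r(2), of s t] st h by auto
  have p1': "x + s *\<^sub>R axis i 1 + t *\<^sub>R axis j 1 \<in> ball x d1"
    using ball_pt[of x d1 "ball x d1" s t] st h by auto
  have p2: "x + s' *\<^sub>R axis j 1 + t' *\<^sub>R axis i 1 \<in> U" using ball_pt[OF r(2), of s' t'] st' h by auto
  have p2': "x + s' *\<^sub>R axis j 1 + t' *\<^sub>R axis i 1 \<in> ball x d2"
    using ball_pt[of x d2 "ball x d2" s' t'] st' h by auto
  have "dist (partial j (partial i f) (x + s *\<^sub>R axis i 1 + t *\<^sub>R axis j 1)) a < e"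
    using d1(2) p1 p1' by (auto simp: dist_commute)
  moreover have "dist (partial i (partial j f) (x + s' *\<^sub>R axis j 1 + t' *\<^sub>R axis i 1)) b < e"
    using d2(2) p2 p2' by (auto simp: dist_commute)
  ultimately show False using eq unfolding e_def dist_real_def by (metis abs_contra)
qed

lemma exhaust4: "(k::4) = 0 \<or> k = 1 \<or> k = 2 \<or> k = 3"
  using exhaust_4[of k] by auto

lemma all4: "(\<forall>k::4. P k) \<longleftrightarrow> P 0 \<and> P 1 \<and> P 2 \<and> P 3"
  using exhaust4 by metis

lemma sum4: "sum f (UNIV::4 set) = f 0 + f 1 + f 2 + f 3"
proof -
  have u: "(UNIV::4 set) = {0,1,2,3}" using exhaust4 by auto
  show ?thesis unfolding u by (simp add: ac_simps)
qed

lemma "(1::4) \<noteq> 0 \<and> (2::4) \<noteq> 3 \<and> (3::4) \<noteq> 1" by simp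

lemma det_4:
  "det (A::'a::comm_ring_1^4^4) =
    A$0$0 * A$1$1 * A$2$2 * A$3$3
    - A$0$0 * A$1$1 * A$2$3 * A$3$2
    - A$0$0 * A$1$2 * A$2$1 * A$3$3
    + A$0$0 * A$1$2 * A$2$3 * A$3$1
    + A$0$0 * A$1$3 * A$2$1 * A$3$2
    - A$0$0 * A$1$3 * A$2$2 * A$3$1
    - A$0$1 * A$1$0 * A$2$2 * A$3$3
    + A$0$1 * A$1$0 * A$2$3 * A$3$2
    + A$0$1 * A$1$2 * A$2$0 * A$3$3
    - A$0$1 * A$1$2 * A$2$3 * A$3$0
    - A$0$1 * A$1$3 * A$2$0 * A$3$2
    + A$0$1 * A$1$3 * A$2$2 * A$3$0
    + A$0$2 * A$1$0 * A$2$1 * A$3$3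
    - A$0$2 * A$1$0 * A$2$3 * A$3$1
    - A$0$2 * A$1$1 * A$2$0 * A$3$3
    + A$0$2 * A$1$1 * A$2$3 * A$3$0
    + A$0$2 * A$1$3 * A$2$0 * A$3$1
    - A$0$2 * A$1$3 * A$2$1 * A$3$0
    - A$0$3 * A$1$0 * A$2$1 * A$3$2
    + A$0$3 * A$1$0 * A$2$2 * A$3$1
    + A$0$3 * A$1$1 * A$2$0 * A$3$2
    - A$0$3 * A$1$1 * A$2$2 * A$3$0
    - A$0$3 * A$1$2 * A$2$0 * A$3$1
    + A$0$3 * A$1$2 * A$2$1 * A$3$0"
proof -
  have u: "(UNIV::4 set) = insert 0 {1,2,3}" using exhaust4 by auto
  have f1: "finite {1::4, 2, 3}" "0 \<notin> {1::4, 2, 3}" by auto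
  have f2: "finite {2::4, 3}" "1 \<notin> {2::4, 3}" by auto
  have f3: "finite {3::4}" "2 \<notin> {3::4}" by auto
  show ?thesis
    unfolding det_def u
    unfolding sum_over_permutations_insert[OF f1]
    unfolding sum_over_permutations_insert[OF f2]
    unfolding sum_over_permutations_insert[OF f3]
    unfolding permutes_sing
    by (simp add: sign_swap_id permutation_swap_id permutation_compose sign_compose sign_id swap_id_eq algebra_simps)
qed

definition pf :: "real^4^4 \<Rightarrow> real" where
  "pf M = M$0$1 * M$2$3 - M$0$2 * M$1$3 + M$0$3 * M$1$2"

definition asym :: "real^4^4 \<Rightarrow> bool" where
  "asym M = (\<forall>i j. M$i$j = - M$j$i)"

lemma asym_simps:
  assumes "asym M"
  shows "M$0$0 = 0" "M$1$1 = 0" "M$2$2 = 0" "M$3$3 = 0"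
    "M$1$0 = - M$0$1" "M$2$0 = - M$0$2" "M$3$0 = - M$0$3"
    "M$2$1 = - M$1$2" "M$3$1 = - M$1$3" "M$3$2 = - M$2$3"
proof -
  have d: "M$i$i = 0" for i proof -
    have "M$i$i = - M$i$i" using assms unfolding asym_def by blast
    then show ?thesis by simp
  qed
  have oo: "M$j$i = - M$i$j" for i j using assms unfolding asym_def by blast
  show "M$0$0 = 0" "M$1$1 = 0" "M$2$2 = 0" "M$3$3 = 0" by (rule d)+
  show "M$1$0 = - M$0$1" "M$2$0 = - M$0$2" "M$3$0 = - M$0$3"
    "M$2$1 = - M$1$2" "M$3$1 = - M$1$3" "M$3$2 = - M$2$3" by (rule oo)+
qed

lemma det_asym: "asym M \<Longrightarrow> det M = (pf M)^2"
  unfolding det_4 pf_def using asym_simps[of M]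
  by (simp add: power2_eq_square algebra_simps)

lemma wedge22_self: "wedge22 M M = 2 * pf M"
  unfolding wedge22_def pf_def by (simp add: algebra_simps)

lemma pf_comb: "pf (t *\<^sub>R W - F) = t^2 * pf W - t * wedge22 W F + pf F"
  unfolding wedge22_def pf_def by (simp add: power2_eq_square algebra_simps)

lemma asym_comb: "asym W \<Longrightarrow> asym F \<Longrightarrow> asym (t *\<^sub>R W - F)"
  unfolding asym_def
proof (intro allI)
  fix i j
  assume a: "\<forall>i j. W $ i $ j = - W $ j $ i" "\<forall>i j. F $ i $ j = - F $ j $ i"
  have "W$i$j = - W$j$i" "F$i$j = - F$j$i" using a by blast+
  then show "(t *\<^sub>R W - F) $ i $ j = - (t *\<^sub>R W - F) $ j $ i" by simp
qed

lemma bil_inner: "bil M X Y = inner X (M *v Y)"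
  unfolding bil_def inner_vec_def matrix_vector_mult_def
  by (simp add: sum_distrib_left mult.assoc)

lemma bil_left: "bil M (A *v X) Y = bil (transpose A ** M) X Y"
proof -
  have "inner (A *v X) (M *v Y) = inner (X v* transpose A) (M *v Y)" by simp
  also have "\<dots> = inner X ((transpose A ** M) *v Y)"
    by (simp only: dot_lmul_matrix matrix_vector_mul_assoc)
  finally show ?thesis by (simp add: bil_inner)
qed

lemma bil_right: "bil M X (A *v Y) = bil (M ** A) X Y"
  by (simp add: bil_inner matrix_vector_mul_assoc)

lemma bil_axis: "bil M (axis i 1) (axis j 1) = M$i$j"
  unfolding bil_def axis_def sum4
  using exhaust4[of i] exhaust4[of j] by auto

lemma bil_ext: "(\<And>X Y. bil M X Y = bil N X Y) \<Longrightarrow> M = N"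
  by (metis bil_axis vec_eq_iff)

lemma neg_mul_l: "(- X) ** (Y::real^4^4) = - (X ** Y)"
  by (simp add: matrix_matrix_mult_def vec_eq_iff sum_negf)

lemma neg_mul_r: "X ** (- Y::real^4^4) = - (X ** Y)"
  by (simp add: matrix_matrix_mult_def vec_eq_iff sum_negf)

lemma transpose_asym: "asym M \<Longrightarrow> transpose M = - M"
  unfolding asym_def transpose_def vec_eq_iff
proof (intro allI)
  fix i j
  assume a: "\<forall>i j. M $ i $ j = - M $ j $ i"
  have "M$j$i = - M$i$j" using a by blast
  then show "(\<chi> i j. M $ j $ i) $ i $ j = (- M) $ i $ j" by simp
qed

lemma A_exists:
  assumes "asym W" "asym F" "det W \<noteq> 0"
  shows "\<exists>A. \<forall>X Y. bil F X Y = bil W (A *v X) Y \<and> bil F X Y = bil W X (A *v Y)"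
proof -
  obtain B where B: "W ** B = mat 1" "B ** W = mat 1"
    using assms(3) invertible_det_nz[of W] unfolding invertible_def by blast
  define A where "A = B ** F"
  have r: "W ** A = F" unfolding A_def by (simp add: matrix_mul_assoc B)
  have "transpose B ** W = - (transpose B ** transpose W)"
    using transpose_asym[OF assms(1)] by (simp add: neg_mul_r)
  also have "\<dots> = - mat 1" by (simp flip: matrix_transpose_mul add: B)
  finally have tB: "transpose B ** W = - mat 1" .
  have l: "transpose A ** W = F"
    unfolding A_def matrix_transpose_mul transpose_asym[OF assms(2)]
    by (simp add: matrix_mul_assoc[symmetric] tB neg_mul_l neg_mul_r)
  show ?thesis by (rule exI[of _ A]) (simp add: bil_left bil_right l r)
qed

lemma A_char:
  fixes W A F :: "real^4^4"
  assumes "\<forall>X Y. bil F X Y = bil W (A *v X) Y \<and> bil F X Y = bil W X (A *v Y)"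
  shows "W ** A = F"
  using assms by (intro bil_ext) (metis bil_right)

lemma A_unique:
  fixes W A A' F :: "real^4^4"
  assumes "det W \<noteq> 0" "W ** A = F" "W ** A' = F"
  shows "A = A'"
proof -
  obtain B where B: "W ** B = mat 1" "B ** W = mat 1"
    using assms(1) invertible_det_nz[of W] unfolding invertible_def by blast
  have "A = (B ** W) ** A" by (simp add: B)
  also have "\<dots> = (B ** W) ** A'" using assms(2,3) by (simp flip: matrix_mul_assoc)
  finally show ?thesis by (simp add: B)
qed

lemma char_poly:
  assumes "asym W" "asym F" "pf W \<noteq> 0" "W ** A = F" "wedge22 W F = 0"
  shows "det (t *\<^sub>R mat 1 - A) = (t^2 + pf F / pf W)^2"
proof -
  have "W ** (t *\<^sub>R mat 1 - A) = t *\<^sub>R W - F"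
  proof -
    have m: "W ** (t *\<^sub>R mat 1) = t *\<^sub>R W"
      unfolding vec_eq_iff all4 by (simp add: matrix_matrix_mult_def mat_def sum4)
    have "t *\<^sub>R mat 1 - A = t *\<^sub>R mat 1 + (- A)" by simp
    then have "W ** (t *\<^sub>R mat 1 - A) = W ** (t *\<^sub>R mat 1) + W ** (- A)"
      by (simp only: matrix_add_ldistrib)
    then show ?thesis using assms(4) m by (simp add: neg_mul_r)
  qed
  then have "det W * det (t *\<^sub>R mat 1 - A) = det (t *\<^sub>R W - F)"
    by (metis det_mul)
  also have "\<dots> = (t^2 * pf W + pf F)^2"
    using det_asym[OF asym_comb[OF assms(1,2)]] pf_comb assms(5) by simp
  finally have "(pf W)^2 * det (t *\<^sub>R mat 1 - A) = (t^2 * pf W + pf F)^2"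
    using det_asym[OF assms(1)] by simp
  then show ?thesis using assms(3) by (simp add: field_simps power2_eq_square)
qed

lemma partial_add:
  assumes "u differentiable (at x)" "v differentiable (at x)"
  shows "partial i (\<lambda>y. u y + v y) x = partial i u x + partial i v x"
proof -
  have "((\<lambda>y. u y + v y) has_derivative (\<lambda>h. frechet_derivative u (at x) h + frechet_derivative v (at x) h)) (at x)"
    using assms by (intro has_derivative_add) (auto simp: frechet_derivative_works)
  from partial_at[OF this, of i] show ?thesis by (simp add: algebra_simps partial_def)
qed

lemma partial_mult:
  fixes u v :: "real^4 \<Rightarrow> real"
  assumes "u differentiable (at x)" "v differentiable (at x)"
  shows "partial i (\<lambda>y. u y * v y) x = partial i u x * v x + u x * partial i v x"
proof -
  have "((\<lambda>y. u y * v y) has_derivative (\<lambda>h. u x * frechet_derivative v (at x) h + frechet_derivative u (at x) h * v x)) (at x)"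
    using assms by (intro has_derivative_mult) (auto simp: frechet_derivative_works)
  from partial_at[OF this, of i] show ?thesis by (simp add: algebra_simps partial_def)
qed

lemma partial_minus:
  fixes u :: "real^4 \<Rightarrow> real"
  assumes "u differentiable (at x)"
  shows "partial i (\<lambda>y. - u y) x = - partial i u x"
proof -
  have "((\<lambda>y. - u y) has_derivative (\<lambda>h. - frechet_derivative u (at x) h)) (at x)"
    using assms by (intro has_derivative_minus) (auto simp: frechet_derivative_works)
  from partial_at[OF this, of i] show ?thesis by (simp add: algebra_simps partial_def)
qed

lemma partial_const: "partial i (\<lambda>y. c) x = 0"
proof -
  have "((\<lambda>y. c) has_derivative (\<lambda>h. 0)) (at x)" by simp
  from partial_at[OF this, of i] show ?thesis by (simp add: algebra_simps partial_def)
qed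

lemma alt_zero:
  fixes \<delta> :: "4 \<Rightarrow> 4 \<Rightarrow> 4 \<Rightarrow> real"
  assumes s1: "\<And>i j k. \<delta> j i k = - \<delta> i j k" and s2: "\<And>i j k. \<delta> i k j = - \<delta> i j k"
    and z: "\<delta> 1 2 3 = 0" "\<delta> 0 2 3 = 0" "\<delta> 0 1 3 = 0" "\<delta> 0 1 2 = 0"
  shows "\<delta> i j k = 0"
proof -
  have r1: "\<delta> i i k = 0" for i k using s1[where i=i and j=i and k=k] by simp
  have r2: "\<delta> i j j = 0" for i j using s2[where i=i and j=j and k=j] by simp
  have r3: "\<delta> i j i = 0" for i j using s1[where i=j and j=i and k=i] r2[of j i] by simp
  have p3: "\<And>i j k. \<delta> j k i = \<delta> i j k" proof - fix i j k show "\<delta> j k i = \<delta> i j k" using s1[of i j k] s2[of j i k] by simp qed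
  have p4: "\<And>i j k. \<delta> k i j = \<delta> i j k" proof - fix i j k show "\<delta> k i j = \<delta> i j k" using s1[of i k j] s2[of i j k] by simp qed
  have p5: "\<And>i j k. \<delta> k j i = - \<delta> i j k" proof - fix i j k show "\<delta> k j i = - \<delta> i j k" using s1[of j k i] s2[of j i k] s1[of i j k] by simp qed
  note inst = s1[where i=1 and j=2 and k=3] s2[where i=1 and j=2 and k=3] p3[where i=1 and j=2 and k=3] p4[where i=1 and j=2 and k=3] p5[where i=1 and j=2 and k=3] s1[where i=0 and j=2 and k=3] s2[where i=0 and j=2 and k=3] p3[where i=0 and j=2 and k=3] p4[where i=0 and j=2 and k=3] p5[where i=0 and j=2 and k=3] s1[where i=0 and j=1 and k=3] s2[where i=0 and j=1 and k=3] p3[where i=0 and j=1 and k=3] p4[where i=0 and j=1 and k=3] p5[where i=0 and j=1 and k=3] s1[where i=0 and j=1 and k=2] s2[where i=0 and j=1 and k=2] p3[where i=0 and j=1 and k=2] p4[where i=0 and j=1 and k=2] p5[where i=0 and j=1 and k=2]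
  show ?thesis
    using exhaust4[of i] exhaust4[of j] exhaust4[of k]
    by (elim disjE) (simp_all only: r1 r2 r3 inst z neg_0_equal_iff_equal minus_zero)
qed

lemma wedge12_alt:
  assumes "asym W"
  shows "wedge12 w W j i k = - wedge12 w W i j k" "wedge12 w W i k j = - wedge12 w W i j k"
proof -
  have a: "W$i$k = - W$k$i" "W$k$j = - W$j$k" "W$j$i = - W$i$j"
    using assms unfolding asym_def by blast+
  show "wedge12 w W j i k = - wedge12 w W i j k" "wedge12 w W i k j = - wedge12 w W i j k"
    unfolding wedge12_def using a by (simp_all add: algebra_simps)
qed

theorem proposition4p1:
  fixes U :: "(real^4) set" and \<Omega> :: "real^4 \<Rightarrow> real^4^4" and x :: "real^4"
  assumes "open U" and "x \<in> U"
    and "\<forall>i j. smooth_on U (\<lambda>y. \<Omega> y $ i $ j)"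
    and "\<forall>y\<in>U. \<forall>i j. \<Omega> y $ i $ j = - \<Omega> y $ j $ i"
    and "\<forall>y\<in>U. rank (\<Omega> y) = 4"
    and "form_class (omegaO \<Omega> x) (d1 (omegaO \<Omega>) x) = 4"
  shows "\<forall>t::real. det (t *\<^sub>R mat 1 - A_Omega \<Omega> x) = (t\<^sup>2 + Iinv \<Omega> x)\<^sup>2"
proof -
  note opn = assms(1) and xU = assms(2)
  have Ck: "Ck_on 2 U (\<lambda>z. \<Omega> z $ k $ l)" for k l
    using assms(3) unfolding smooth_on_def by blast
  have Ck': "(\<forall>y\<in>U. (\<lambda>z. \<Omega> z $ k $ l) differentiable (at y)) \<and>
       (\<forall>i. Ck_on (Suc 0) U (partial i (\<lambda>z. \<Omega> z $ k $ l)))" for k l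
    using Ck[of k l] by (simp add: numeral_2_eq_2)
  have fd: "(\<lambda>z. \<Omega> z $ k $ l) differentiable (at y)" if "y \<in> U" for k l y
    using Ck'[of k l] that by blast
  have pd: "partial i (\<lambda>z. \<Omega> z $ k $ l) differentiable (at y)" if "y \<in> U" for i k l y
    using Ck'[of k l] that by simp
  have sw: "partial i (partial j (\<lambda>z. \<Omega> z $ k $ l)) x = partial j (partial i (\<lambda>z. \<Omega> z $ k $ l)) x"
    for i j k l
    using schwarz[OF opn xU Ck] .
  have fas: "\<Omega> y $ l $ k = - \<Omega> y $ k $ l" if "y \<in> U" for k l y
    using assms(4) that by blast
  have as: "asym (\<Omega> y)" if "y \<in> U" for y using assms(4) that unfolding asym_def by blast
  have P: "pf (\<Omega> y) \<noteq> 0" if "y \<in> U" for y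
  proof -
    have "det (\<Omega> y) \<noteq> 0" using assms(5) that det_eq_0_rank[of "\<Omega> y"] by simp
    then show ?thesis using det_asym[OF as[OF that]] by simp
  qed
  have has: "partial i (\<lambda>z. \<Omega> z $ l $ k) y = - partial i (\<lambda>z. \<Omega> z $ k $ l) y"
    if "y \<in> U" for i k l y
  proof -
    have "partial i (\<lambda>z. \<Omega> z $ l $ k) y = partial i (\<lambda>z. - \<Omega> z $ k $ l) y"
      by (rule partial_cong[OF opn that]) (rule fas)
    also have "\<dots> = - partial i (\<lambda>z. \<Omega> z $ k $ l) y" by (rule partial_minus[OF fd[OF that]])
    finally show ?thesis .
  qed
  have sas: "partial i (partial j (\<lambda>z. \<Omega> z $ l $ k)) x = - partial i (partial j (\<lambda>z. \<Omega> z $ k $ l)) x"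
    for i j k l
  proof -
    have "partial i (partial j (\<lambda>z. \<Omega> z $ l $ k)) x = partial i (\<lambda>y. - partial j (\<lambda>z. \<Omega> z $ k $ l) y) x"
      by (rule partial_cong[OF opn xU]) (rule has)
    also have "\<dots> = - partial i (partial j (\<lambda>z. \<Omega> z $ k $ l)) x" by (rule partial_minus[OF pd[OF xU]])
    finally show ?thesis .
  qed
  have d2_as1: "d2 \<Omega> y j i k = - d2 \<Omega> y i j k" if "y \<in> U" for i j k y
    using has[OF that, where i=j and l=i and k=k] has[OF that, where i=i and l=k and k=j]
      has[OF that, where i=k and l=j and k=i]
    unfolding d2_def by simp
  have d2_as2: "d2 \<Omega> y i k j = - d2 \<Omega> y i j k" if "y \<in> U" for i j k y
    using has[OF that, where i=i and l=k and k=j] has[OF that, where i=k and l=j and k=i]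
      has[OF that, where i=j and l=i and k=k]
    unfolding d2_def by simp
  define E where "E y = (\<chi> m::4. (if m = 0 then \<Omega> y$0$1 * d2 \<Omega> y 0 2 3 - \<Omega> y$0$2 * d2 \<Omega> y 0 1 3 + \<Omega> y$0$3 * d2 \<Omega> y 0 1 2
       else if m = 1 then \<Omega> y$0$1 * d2 \<Omega> y 1 2 3 - \<Omega> y$1$2 * d2 \<Omega> y 0 1 3 + \<Omega> y$1$3 * d2 \<Omega> y 0 1 2
       else if m = 2 then \<Omega> y$0$2 * d2 \<Omega> y 1 2 3 - \<Omega> y$1$2 * d2 \<Omega> y 0 2 3 + \<Omega> y$2$3 * d2 \<Omega> y 0 1 2
       else \<Omega> y$0$3 * d2 \<Omega> y 1 2 3 - \<Omega> y$1$3 * d2 \<Omega> y 0 2 3 + \<Omega> y$2$3 * d2 \<Omega> y 0 1 3) / pf (\<Omega> y))" for y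
  have E0: "E y $ 0 = (\<Omega> y$0$1 * d2 \<Omega> y 0 2 3 - \<Omega> y$0$2 * d2 \<Omega> y 0 1 3 + \<Omega> y$0$3 * d2 \<Omega> y 0 1 2) / pf (\<Omega> y)"
    and E1: "E y $ 1 = (\<Omega> y$0$1 * d2 \<Omega> y 1 2 3 - \<Omega> y$1$2 * d2 \<Omega> y 0 1 3 + \<Omega> y$1$3 * d2 \<Omega> y 0 1 2) / pf (\<Omega> y)"
    and E2: "E y $ 2 = (\<Omega> y$0$2 * d2 \<Omega> y 1 2 3 - \<Omega> y$1$2 * d2 \<Omega> y 0 2 3 + \<Omega> y$2$3 * d2 \<Omega> y 0 1 2) / pf (\<Omega> y)"
    and E3: "E y $ 3 = (\<Omega> y$0$3 * d2 \<Omega> y 1 2 3 - \<Omega> y$1$3 * d2 \<Omega> y 0 2 3 + \<Omega> y$2$3 * d2 \<Omega> y 0 1 3) / pf (\<Omega> y)"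
    for y unfolding E_def by simp_all
  have Esol: "\<forall>i j k. wedge12 (E y) (\<Omega> y) i j k = d2 \<Omega> y i j k" if "y \<in> U" for y
  proof (intro allI)
    fix i j k
    let ?\<delta> = "\<lambda>i j k. wedge12 (E y) (\<Omega> y) i j k - d2 \<Omega> y i j k"
    have "?\<delta> i j k = 0"
    proof (rule alt_zero)
      fix i j k
      show "?\<delta> j i k = - ?\<delta> i j k"
        using wedge12_alt(1)[OF as[OF that], where w="E y" and i=i and j=j and k=k]
          d2_as1[OF that, where i=i and j=j and k=k] by simp
    next
      fix i j k
      show "?\<delta> i k j = - ?\<delta> i j k"
        using wedge12_alt(2)[OF as[OF that], where w="E y" and i=i and j=j and k=k]
          d2_as2[OF that, where i=i and j=j and k=k] by simp
    next
      have pf: "pf (\<Omega> y) \<noteq> 0" using P[OF that] .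
      note a = asym_simps[OF as[OF that]]
      show "?\<delta> 1 2 3 = 0" "?\<delta> 0 2 3 = 0" "?\<delta> 0 1 3 = 0" "?\<delta> 0 1 2 = 0"
        by (simp_all add: wedge12_def E0 E1 E2 E3 a field_simps pf) (simp_all add: pf_def algebra_simps)
    qed
    then show "wedge12 (E y) (\<Omega> y) i j k = d2 \<Omega> y i j k" by simp
  qed
  have Euniq: "w = E y" if "y \<in> U" "\<forall>i j k. wedge12 w (\<Omega> y) i j k = d2 \<Omega> y i j k" for y w
  proof -
    have pf: "pf (\<Omega> y) \<noteq> 0" using P[OF that(1)] .
    note a = asym_simps[OF as[OF that(1)]]
    have t: "d2 \<Omega> y 1 2 3 = wedge12 w (\<Omega> y) 1 2 3" "d2 \<Omega> y 0 2 3 = wedge12 w (\<Omega> y) 0 2 3"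
       "d2 \<Omega> y 0 1 3 = wedge12 w (\<Omega> y) 0 1 3" "d2 \<Omega> y 0 1 2 = wedge12 w (\<Omega> y) 0 1 2"
      using that(2) by simp_all
    show ?thesis
      unfolding vec_eq_iff all4 E0 E1 E2 E3 t
      by (simp add: wedge12_def a field_simps pf) (simp add: pf_def algebra_simps)
  qed
  have om: "omegaO \<Omega> y = E y" if "y \<in> U" for y
    unfolding omegaO_def
  proof (rule the_equality)
    show "\<forall>i j k. wedge12 (E y) (\<Omega> y) i j k = d2 \<Omega> y i j k" by (rule Esol[OF that])
    fix w assume "\<forall>i j k. wedge12 w (\<Omega> y) i j k = d2 \<Omega> y i j k"
    then show "w = E y" by (rule Euniq[OF that])
  qed
  have fdx: "(\<lambda>z. \<Omega> z $ k $ l) differentiable (at x)" for k l using fd[OF xU] .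
  have pdx: "partial i (\<lambda>z. \<Omega> z $ k $ l) differentiable (at x)" for i k l using pd[OF xU] .
  have d2d: "(\<lambda>y. d2 \<Omega> y a b c) differentiable (at x)" for a b c
    unfolding d2_def by (intro differentiable_add pdx)
  have pfd: "(\<lambda>y. pf (\<Omega> y)) differentiable (at x)"
    unfolding pf_def by (intro differentiable_add differentiable_diff differentiable_mult fdx)
  have Ed: "(\<lambda>y. E y $ m) differentiable (at x)" for m
  proof -
    have "m = 0 \<or> m = 1 \<or> m = 2 \<or> m = 3" by (rule exhaust4)
    then show ?thesis
      by (elim disjE; simp only: E0 E1 E2 E3;
          intro differentiable_divide differentiable_add differentiable_diff differentiable_mult fdx d2d pfd P[OF xU])
  qed
  have wd: "(\<lambda>y. omegaO \<Omega> y $ m) differentiable (at x)" for m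
  proof -
    obtain D where D: "((\<lambda>y. E y $ m) has_derivative D) (at x)"
      using Ed[of m] unfolding differentiable_def by blast
    have "((\<lambda>y. omegaO \<Omega> y $ m) has_derivative D) (at x)"
      by (rule has_derivative_transform_within_open[OF D opn xU]) (simp add: om)
    then show ?thesis unfolding differentiable_def by blast
  qed
  have D1: "partial i (\<lambda>y. d2 \<Omega> y a b c) x =
      partial i (partial a (\<lambda>z. \<Omega> z $ b $ c)) x + partial i (partial b (\<lambda>z. \<Omega> z $ c $ a)) x
      + partial i (partial c (\<lambda>z. \<Omega> z $ a $ b)) x" for i a b c
    unfolding d2_def
    by (simp add: partial_add pdx differentiable_add)
  have D2: "partial i (\<lambda>y. d2 \<Omega> y a b c) x =
      partial i (\<lambda>y. omegaO \<Omega> y $ a) x * \<Omega> x $ b $ c + omegaO \<Omega> x $ a * partial i (\<lambda>z. \<Omega> z $ b $ c) x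
    + partial i (\<lambda>y. omegaO \<Omega> y $ b) x * \<Omega> x $ c $ a + omegaO \<Omega> x $ b * partial i (\<lambda>z. \<Omega> z $ c $ a) x
    + partial i (\<lambda>y. omegaO \<Omega> y $ c) x * \<Omega> x $ a $ b + omegaO \<Omega> x $ c * partial i (\<lambda>z. \<Omega> z $ a $ b) x"
    (is "_ = ?R") for i a b c
  proof -
    have "partial i (\<lambda>y. d2 \<Omega> y a b c) x = partial i (\<lambda>y. omegaO \<Omega> y $ a * \<Omega> y $ b $ c
       + omegaO \<Omega> y $ b * \<Omega> y $ c $ a + omegaO \<Omega> y $ c * \<Omega> y $ a $ b) x"
    proof (rule partial_cong[OF opn xU])
      fix y assume y: "y \<in> U"
      show "d2 \<Omega> y a b c = omegaO \<Omega> y $ a * \<Omega> y $ b $ c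
       + omegaO \<Omega> y $ b * \<Omega> y $ c $ a + omegaO \<Omega> y $ c * \<Omega> y $ a $ b"
        using Esol[OF y] om[OF y] unfolding wedge12_def by simp
    qed
    also have "\<dots> = ?R"
      by (simp add: partial_add partial_mult wd fdx)
    finally show ?thesis .
  qed
  define F where "F = d1 (omegaO \<Omega>) x"
  have Fe: "F $ i $ j = partial i (\<lambda>y. omegaO \<Omega> y $ j) x - partial j (\<lambda>y. omegaO \<Omega> y $ i) x" for i j
    unfolding F_def d1_def by simp
  have Z1: "partial 0 (\<lambda>y. d2 \<Omega> y 1 2 3) x - partial 1 (\<lambda>y. d2 \<Omega> y 0 2 3) x
          + partial 2 (\<lambda>y. d2 \<Omega> y 0 1 3) x - partial 3 (\<lambda>y. d2 \<Omega> y 0 1 2) x = 0"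
    unfolding D1
    using sas[where i=0 and j=2 and l=3 and k=1] sas[where i=1 and j=2 and l=3 and k=0]
      sas[where i=2 and j=1 and l=3 and k=0] sas[where i=3 and j=1 and l=2 and k=0]
      sw[where i=0 and j=1 and k=2 and l=3] sw[where i=0 and j=2 and k=1 and l=3]
      sw[where i=0 and j=3 and k=1 and l=2] sw[where i=1 and j=2 and k=0 and l=3]
      sw[where i=1 and j=3 and k=0 and l=2] sw[where i=2 and j=3 and k=0 and l=1]
    by linarith
  note ax = asym_simps[OF as[OF xU]]
  have Tw: "d2 \<Omega> x a b c = wedge12 (omegaO \<Omega> x) (\<Omega> x) a b c" for a b c
    using Esol[OF xU] om[OF xU] by simp
  have wz: "- omegaO \<Omega> x $ 0 * d2 \<Omega> x 1 2 3 + omegaO \<Omega> x $ 1 * d2 \<Omega> x 0 2 3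
     - omegaO \<Omega> x $ 2 * d2 \<Omega> x 0 1 3 + omegaO \<Omega> x $ 3 * d2 \<Omega> x 0 1 2 = 0"
    unfolding Tw wedge12_def ax by (simp add: algebra_simps)
  have Z2: "partial 0 (\<lambda>y. d2 \<Omega> y 1 2 3) x - partial 1 (\<lambda>y. d2 \<Omega> y 0 2 3) x
          + partial 2 (\<lambda>y. d2 \<Omega> y 0 1 3) x - partial 3 (\<lambda>y. d2 \<Omega> y 0 1 2) x
     = wedge22 (\<Omega> x) F + (- omegaO \<Omega> x $ 0 * d2 \<Omega> x 1 2 3 + omegaO \<Omega> x $ 1 * d2 \<Omega> x 0 2 3
     - omegaO \<Omega> x $ 2 * d2 \<Omega> x 0 1 3 + omegaO \<Omega> x $ 3 * d2 \<Omega> x 0 1 2)"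
    unfolding D2 wedge22_def Fe
    unfolding d2_def ax has[OF xU, where i=0 and l=3 and k=1] has[OF xU, where i=1 and l=3 and k=0]
      has[OF xU, where i=2 and l=3 and k=0] has[OF xU, where i=3 and l=2 and k=0]
      has[OF xU, where i=2 and l=3 and k=1] has[OF xU, where i=1 and l=2 and k=0]
    by (simp add: algebra_simps)
  have wF: "wedge22 (\<Omega> x) F = 0" using Z1 Z2 wz by linarith
  have Fas: "asym F" unfolding asym_def Fe by simp
  have Ox: "det (\<Omega> x) \<noteq> 0" using P[OF xU] det_asym[OF as[OF xU]] by simp
  obtain A0 where A0: "\<forall>X Y. bil F X Y = bil (\<Omega> x) (A0 *v X) Y \<and> bil F X Y = bil (\<Omega> x) X (A0 *v Y)"
    using A_exists[OF as[OF xU] Fas Ox] by blast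
  have AO: "\<Omega> x ** A_Omega \<Omega> x = F"
  proof -
    have "\<forall>X Y. bil F X Y = bil (\<Omega> x) (A_Omega \<Omega> x *v X) Y \<and> bil F X Y = bil (\<Omega> x) X (A_Omega \<Omega> x *v Y)"
      unfolding A_Omega_def F_def[symmetric]
    proof (rule theI[of _ A0])
      show "\<forall>X Y. bil F X Y = bil (\<Omega> x) (A0 *v X) Y \<and> bil F X Y = bil (\<Omega> x) X (A0 *v Y)" by (rule A0)
      fix A assume "\<forall>X Y. bil F X Y = bil (\<Omega> x) (A *v X) Y \<and> bil F X Y = bil (\<Omega> x) X (A *v Y)"
      then show "A = A0" using A_unique[OF Ox A_char A_char[OF A0]] by blast
    qed
    then show ?thesis by (rule A_char)
  qed
  have I: "Iinv \<Omega> x = pf F / pf (\<Omega> x)"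
    unfolding Iinv_def F_def[symmetric]
    by (rule the_equality) (use P[OF xU] in \<open>simp_all add: wedge22_self field_simps\<close>)
  show ?thesis
    using char_poly[OF as[OF xU] Fas P[OF xU] AO wF] I by simp
qed

end
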